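(* Let $\alpha \in [0,1)$. For every $k \in \{0,\dots,m-1\}$, with $\mathbf{S}_k = (S_k,\dots,S_k)$, $$B_{T_\ell}^*(\mathbf{S}_k) = S_{\min}\left(1 - \sqrt[n]{\alpha}\right) + S_k \sqrt[n]{\alpha}.$$
   Context: Fix integers $m \ge 2$, $n \ge 1$ and reals $S_{\min} < S_{\max}$; $S = \{S_0,\dots,S_{m-1}\}$ with $S_k = S_{\min} + k\frac{S_{\max}-S_{\min}}{m-1}$. $\mathcal{F}$ is the set of probability distributions on $S$, identified with the probability simplex in $\mathbb{R}^m$ with the Euclidean topology; $E[F]$ is the mean. $\Omega$ is the set of samples of size $n$ from $S$, identified with their sorted versions $x_{(1)} \le \dots \le x_{(n)}$. $P_F[\Omega']$ is the probability that the sorted sample of $n$ i.i.d. draws from $F$ lies in $\Omega' \subseteq \Omega$; $\mathcal{G}(\Omega',\alpha) = \{F : P_F[\Omega'] > \alpha\}$ and $\mathcal{F}(\Omega',\alpha)$ is its closure. The low lexicographic order $T_\ell$: $\mathbf{x} \le_{T_\ell} \mathbf{y}$ iff $\mathbf{x}=\mathbf{y}$ or at the smallest index $j$ with $x_{(j)} \ne y_{(j)}$ we have $x_{(j)} < y_{(j)}$. $\Omega(\mathbf{x},T_\ell) = \{\mathbf{y} : \mathbf{x} \le_{T_\ell} \mathbf{y}\}$ and $B_{T_\ell}^*(\mathbf{x}) = \min\{E[F] : F \in \mathcal{F}(\Omega(\mathbf{x},T_\ell),\alpha)\}$. *)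

theory Defs
  imports "HOL-Analysis.Analysis"
begin

definition Sgrid :: "nat \<Rightarrow> real \<Rightarrow> real \<Rightarrow> nat \<Rightarrow> real" where
  "Sgrid m Smin Smax k = Smin + real k * (Smax - Smin) / (real m - 1)"

text \<open>Probability prob_simplex in R^m, coordinates 0..m-1 (functions vanishing outside).
  Topology: product topology on nat => real, which restricted to this set is the
  Euclidean topology of R^m.\<close>
definition prob_simplex :: "nat \<Rightarrow> (nat \<Rightarrow> real) set" where
  "prob_simplex m = {F. (\<forall>i<m. 0 \<le> F i) \<and> (\<forall>i\<ge>m. F i = 0) \<and> (\<Sum>i<m. F i) = 1}"

definition mean :: "nat \<Rightarrow> real \<Rightarrow> real \<Rightarrow> (nat \<Rightarrow> real) \<Rightarrow> real" where
  "mean m Smin Smax F = (\<Sum>i<m. F i * Sgrid m Smin Smax i)"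

definition Samples :: "nat \<Rightarrow> nat \<Rightarrow> real \<Rightarrow> real \<Rightarrow> real list set" where
  "Samples m n Smin Smax = {y. length y = n \<and> sorted y \<and> set y \<subseteq> Sgrid m Smin Smax ` {..<m}}"

text \<open>P_F[Omega']: probability that the sorted sample of n iid draws from F lies in Omega'.\<close>
definition probF :: "nat \<Rightarrow> nat \<Rightarrow> real \<Rightarrow> real \<Rightarrow> (nat \<Rightarrow> real) \<Rightarrow> real list set \<Rightarrow> real" where
  "probF m n Smin Smax F \<Omega>' =
     (\<Sum>w \<in> {..<n} \<rightarrow>\<^sub>E {..<m}.
        (if sort (map (\<lambda>j. Sgrid m Smin Smax (w j)) [0..<n]) \<in> \<Omega>'
         then (\<Prod>j<n. F (w j)) else 0))"

definition Gset :: "nat \<Rightarrow> nat \<Rightarrow> real \<Rightarrow> real \<Rightarrow> real list set \<Rightarrow> real \<Rightarrow> (nat \<Rightarrow> real) set" where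
  "Gset m n Smin Smax \<Omega>' \<alpha> = {F \<in> prob_simplex m. probF m n Smin Smax F \<Omega>' > \<alpha>}"

definition Fset :: "nat \<Rightarrow> nat \<Rightarrow> real \<Rightarrow> real \<Rightarrow> real list set \<Rightarrow> real \<Rightarrow> (nat \<Rightarrow> real) set" where
  "Fset m n Smin Smax \<Omega>' \<alpha> = closure (Gset m n Smin Smax \<Omega>' \<alpha>)"

definition lowlex_le :: "nat \<Rightarrow> real list \<Rightarrow> real list \<Rightarrow> bool" where
  "lowlex_le n x y \<longleftrightarrow> x = y \<or>
     (\<exists>j<n. (\<forall>i<j. x ! i = y ! i) \<and> x ! j < y ! j)"

definition OmegaTl :: "nat \<Rightarrow> nat \<Rightarrow> real \<Rightarrow> real \<Rightarrow> real list \<Rightarrow> real list set" where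
  "OmegaTl m n Smin Smax x = {y \<in> Samples m n Smin Smax. lowlex_le n x y}"

text \<open>The set {E[F] : F in F(Omega(x,T_l), alpha)}; B*_{T_l}(x) is its minimum.\<close>
definition Bvals :: "nat \<Rightarrow> nat \<Rightarrow> real \<Rightarrow> real \<Rightarrow> real \<Rightarrow> real list \<Rightarrow> real set" where
  "Bvals m n Smin Smax \<alpha> x = mean m Smin Smax ` Fset m n Smin Smax (OmegaTl m n Smin Smax x) \<alpha>"

end

theory Submission
  imports Defs
begin

lemma sgrid_le_iff:
  assumes "m \<ge> 2" "Smin < Smax"
  shows "Sgrid m Smin Smax i \<le> Sgrid m Smin Smax j \<longleftrightarrow> i \<le> j"
proof -
  define d where "d = (Smax - Smin) / (real m - 1)"
  have p: "d > 0" using assms unfolding d_def by auto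
  have "Sgrid m Smin Smax i \<le> Sgrid m Smin Smax j \<longleftrightarrow> real i * d \<le> real j * d"
    by (simp add: Sgrid_def d_def)
  also have "\<dots> \<longleftrightarrow> i \<le> j" using p by (simp add: mult_le_cancel_right)
  finally show ?thesis .
qed

lemma lowlex_rep:
  assumes len: "length y = n" and srt: "sorted y"
  shows "lowlex_le n (replicate n c) y \<longleftrightarrow> (\<forall>z\<in>set y. c \<le> z)"
proof
  assume "lowlex_le n (replicate n c) y"
  then have H: "replicate n c = y \<or> (\<exists>j<n. (\<forall>i<j. replicate n c ! i = y ! i) \<and> replicate n c ! j < y ! j)"
    unfolding lowlex_le_def .
  show "\<forall>z\<in>set y. c \<le> z"
  proof (cases "replicate n c = y")
    case True
    then show ?thesis by (metis in_set_replicate order_refl)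
  next
    case False
    then obtain j where j: "j < n" "\<forall>i<j. replicate n c ! i = y ! i" "replicate n c ! j < y ! j"
      using H by blast
    have y0: "c \<le> y ! 0"
    proof (cases "j = 0")
      case True
      then have "replicate n c ! 0 < y ! 0" using j(3) by simp
      then show ?thesis using j(1) True by simp
    next
      case False
      then have "replicate n c ! 0 = y ! 0" using j(2) by simp
      then show ?thesis using j(1) by simp
    qed
    show ?thesis
    proof
      fix z assume "z \<in> set y"
      then obtain p where p: "p < length y" "y ! p = z" by (metis in_set_conv_nth)
      have "y ! 0 \<le> y ! p" using srt p(1) by (simp add: sorted_nth_mono)
      then show "c \<le> z" using y0 p(2) by simp
    qed
  qed
next
  assume A: "\<forall>z\<in>set y. c \<le> z"
  show "lowlex_le n (replicate n c) y"
  proof (cases "\<exists>p<n. y ! p \<noteq> c")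
    case False
    have "replicate n c = y"
    proof (rule nth_equalityI)
      show "length (replicate n c) = length y" using len by simp
      fix i assume "i < length (replicate n c)"
      then have "i < n" by simp
      then show "replicate n c ! i = y ! i" using False by simp
    qed
    then show ?thesis unfolding lowlex_le_def by simp
  next
    case True
    define j where "j = (LEAST p. p < n \<and> y ! p \<noteq> c)"
    have j: "j < n \<and> y ! j \<noteq> c" unfolding j_def using True by (rule LeastI_ex)
    have jl: "\<forall>i<j. replicate n c ! i = y ! i"
    proof (intro allI impI)
      fix i assume "i < j"
      then have "\<not> (i < n \<and> y ! i \<noteq> c)" unfolding j_def by (rule not_less_Least)
      moreover have "i < n" using \<open>i < j\<close> j by simp
      ultimately show "replicate n c ! i = y ! i" by simp
    qed
    have "y ! j \<in> set y" using j len by simp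
    then have "c \<le> y ! j" using A by blast
    then have "replicate n c ! j < y ! j" using j by simp
    then show ?thesis unfolding lowlex_le_def using j jl by blast
  qed
qed

lemma probF_formula:
  assumes "m \<ge> 2" "Smin < Smax" "k < m"
  shows "probF m n Smin Smax F (OmegaTl m n Smin Smax (replicate n (Sgrid m Smin Smax k)))
       = (\<Sum>i\<in>{k..<m}. F i) ^ n"
proof -
  let ?S = "Sgrid m Smin Smax"
  have cond: "(sort (map (\<lambda>j. ?S (w j)) [0..<n]) \<in> OmegaTl m n Smin Smax (replicate n (?S k)))
      \<longleftrightarrow> (\<forall>j<n. k \<le> w j)" if w: "w \<in> {..<n} \<rightarrow>\<^sub>E {..<m}" for w
  proof -
    let ?y = "sort (map (\<lambda>j. ?S (w j)) [0..<n])"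
    have len: "length ?y = n" by simp
    have st: "sorted ?y" by simp
    have set: "set ?y = (\<lambda>j. ?S (w j)) ` {..<n}" by auto
    have samp: "?y \<in> Samples m n Smin Smax"
      unfolding Samples_def using w set by auto
    have "?y \<in> OmegaTl m n Smin Smax (replicate n (?S k)) \<longleftrightarrow> (\<forall>z\<in>set ?y. ?S k \<le> z)"
      unfolding OmegaTl_def using samp lowlex_rep[OF len st] by auto
    also have "\<dots> \<longleftrightarrow> (\<forall>j<n. k \<le> w j)"
      unfolding set using sgrid_le_iff[OF assms(1,2)] by auto
    finally show ?thesis .
  qed
  have "probF m n Smin Smax F (OmegaTl m n Smin Smax (replicate n (?S k)))
      = (\<Sum>w\<in>{..<n} \<rightarrow>\<^sub>E {..<m}. if (\<forall>j<n. k \<le> w j) then (\<Prod>j<n. F (w j)) else 0)"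
    unfolding probF_def by (rule sum.cong) (auto simp: cond)
  also have "\<dots> = (\<Sum>w\<in>{w\<in>{..<n} \<rightarrow>\<^sub>E {..<m}. \<forall>j<n. k \<le> w j}. \<Prod>j<n. F (w j))"
    by (rule sum.inter_filter[symmetric]) (auto intro: finite_PiE)
  also have "{w\<in>{..<n} \<rightarrow>\<^sub>E {..<m}. \<forall>j<n. k \<le> w j} = {..<n} \<rightarrow>\<^sub>E {k..<m}"
    by (auto simp: PiE_def Pi_def)
  also have "(\<Sum>w\<in>{..<n} \<rightarrow>\<^sub>E {k..<m}. \<Prod>j<n. F (w j)) = (\<Prod>j<n. \<Sum>i\<in>{k..<m}. F i)"
    by (rule prod_sum_PiE[symmetric]) auto
  also have "\<dots> = (\<Sum>i\<in>{k..<m}. F i) ^ n" by simp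
  finally show ?thesis .
qed

theorem lemma7:
  fixes m n k :: nat and Smin Smax \<alpha> :: real
  assumes "m \<ge> 2" and "n \<ge> 1" and "Smin < Smax"
    and "0 \<le> \<alpha>" and "\<alpha> < 1" and "k < m"
  shows "Smin * (1 - root n \<alpha>) + Sgrid m Smin Smax k * root n \<alpha>
           \<in> Bvals m n Smin Smax \<alpha> (replicate n (Sgrid m Smin Smax k)) \<and>
         (\<forall>v \<in> Bvals m n Smin Smax \<alpha> (replicate n (Sgrid m Smin Smax k)).
           Smin * (1 - root n \<alpha>) + Sgrid m Smin Smax k * root n \<alpha> \<le> v)"
proof -
  let ?S = "Sgrid m Smin Smax"
  define r where "r = root n \<alpha>"
  define c where "c = Smin * (1 - r) + ?S k * r"
  define \<Omega> where "\<Omega> = OmegaTl m n Smin Smax (replicate n (?S k))"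
  define G where "G = Gset m n Smin Smax \<Omega> \<alpha>"
  define q where "q = (\<lambda>F::nat\<Rightarrow>real. \<Sum>i\<in>{k..<m}. F i)"
  have n0: "0 < n" using assms by simp
  have r0: "0 \<le> r" unfolding r_def using assms by simp
  have r1: "r < 1" unfolding r_def using assms n0 by simp
  have rn: "r ^ n = \<alpha>" unfolding r_def using assms n0 by (simp add: real_root_pow_pos2)
  have S0: "?S 0 = Smin" by (simp add: Sgrid_def)
  have Sk: "Smin \<le> ?S k" using sgrid_le_iff[OF assms(1,3), of 0 k] S0 by simp
  have probq: "probF m n Smin Smax F \<Omega> = q F ^ n" for F
    unfolding \<Omega>_def q_def using probF_formula[OF assms(1,3,6)] by simp
  have Gchar: "G = {F \<in> prob_simplex m. q F ^ n > \<alpha>}"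
    unfolding G_def Gset_def probq by simp
  have split: "(\<Sum>i<m. f i) = (\<Sum>i<k. f i) + (\<Sum>i\<in>{k..<m}. f i)" for f :: "nat \<Rightarrow> real"
  proof -
    have "(\<Sum>i<m. f i) = (\<Sum>i\<in>{0..<m}. f i)" by (simp add: atLeast0LessThan)
    also have "\<dots> = (\<Sum>i\<in>{0..<k}. f i) + (\<Sum>i\<in>{k..<m}. f i)"
      using assms(6) by (simp add: sum.atLeastLessThan_concat)
    finally show ?thesis by (simp add: atLeast0LessThan)
  qed
  have lower: "c \<le> mean m Smin Smax F" if F: "F \<in> G" for F
  proof -
    have simp: "F \<in> prob_simplex m" and qa: "q F ^ n > \<alpha>" using F Gchar by auto
    have nn: "\<forall>i<m. 0 \<le> F i" and s1: "(\<Sum>i<m. F i) = 1"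
      using simp unfolding prob_simplex_def by auto
    have q0: "0 \<le> q F" unfolding q_def using nn by (auto intro: sum_nonneg)
    have qr: "r \<le> q F"
    proof (rule ccontr)
      assume "\<not> r \<le> q F"
      then have "q F ^ n \<le> r ^ n" using q0 by (intro power_mono) auto
      then show False using qa rn by simp
    qed
    have low: "1 - q F = (\<Sum>i<k. F i)" using split[of F] s1 unfolding q_def by simp
    have a: "(\<Sum>i<k. F i * ?S i) \<ge> (\<Sum>i<k. F i * Smin)"
    proof (rule sum_mono)
      fix i assume "i \<in> {..<k}"
      then have "0 \<le> F i" "Smin \<le> ?S i" using nn assms(6) sgrid_le_iff[OF assms(1,3), of 0 i] S0 by auto
      then show "F i * Smin \<le> F i * ?S i" by (simp add: mult_left_mono)
    qed
    have b: "(\<Sum>i\<in>{k..<m}. F i * ?S i) \<ge> (\<Sum>i\<in>{k..<m}. F i * ?S k)"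
    proof (rule sum_mono)
      fix i assume "i \<in> {k..<m}"
      then have "0 \<le> F i" "?S k \<le> ?S i" using nn sgrid_le_iff[OF assms(1,3), of k i] by auto
      then show "F i * ?S k \<le> F i * ?S i" by (simp add: mult_left_mono)
    qed
    have "mean m Smin Smax F = (\<Sum>i<k. F i * ?S i) + (\<Sum>i\<in>{k..<m}. F i * ?S i)"
      unfolding mean_def by (rule split)
    moreover have "Smin * (1 - q F) = (\<Sum>i<k. F i * Smin)"
      using low by (simp add: sum_distrib_left mult.commute)
    moreover have "?S k * q F = (\<Sum>i\<in>{k..<m}. F i * ?S k)"
      unfolding q_def by (simp add: sum_distrib_left mult.commute)
    ultimately have m1: "Smin * (1 - q F) + ?S k * q F \<le> mean m Smin Smax F"
      using a b by linarith
    have "Smin * (1 - q F) + ?S k * q F - c = (?S k - Smin) * (q F - r)"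
      unfolding c_def by (simp add: algebra_simps)
    moreover have "(?S k - Smin) * (q F - r) \<ge> 0" using Sk qr by simp
    ultimately show ?thesis using m1 by linarith
  qed
  have cont: "continuous_on UNIV (mean m Smin Smax)"
    unfolding mean_def by (intro continuous_intros continuous_on_product_coordinates)
  have closedC: "closed {F. c \<le> mean m Smin Smax F}"
    using cont by (intro closed_Collect_le) (auto intro: continuous_intros)
  have closL: "closure G \<subseteq> {F. c \<le> mean m Smin Smax F}"
    by (rule closure_minimal) (use lower closedC in auto)
  define Fs where "Fs = (\<lambda>s::real. \<lambda>i::nat. (if i = 0 then 1 - s else 0) + (if i = k then s else 0))"
  have inG: "Fs s \<in> G" if s: "s \<in> {r<..1}" for s
  proof -
    have sp: "Fs s \<in> prob_simplex m"
    proof -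
      have s0: "0 \<le> s" "s \<le> 1" using s r0 by auto
      have a1: "\<forall>i<m. 0 \<le> Fs s i" unfolding Fs_def using s0 by auto
      have a2: "\<forall>i\<ge>m. Fs s i = 0" unfolding Fs_def using assms(1,6) by auto
      have "(\<Sum>i<m. Fs s i) = (\<Sum>i<m. (if i = 0 then 1 - s else 0)) + (\<Sum>i<m. (if i = k then s else 0))"
        unfolding Fs_def by (rule sum.distrib)
      also have "\<dots> = 1" using assms(1,6) by (simp add: sum.delta)
      finally show ?thesis using a1 a2 unfolding prob_simplex_def by blast
    qed
    have "q (Fs s) = (if k = 0 then 1 - s else 0) + s"
      unfolding q_def Fs_def using assms(6) by (simp add: sum.distrib)
    then have qs: "s \<le> q (Fs s)" using s by auto
    have "\<alpha> < s ^ n" using s r0 rn n0 by (metis greaterThanAtMost_iff power_strict_mono)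
    also have "\<dots> \<le> q (Fs s) ^ n" using qs s r0 by (intro power_mono) auto
    finally show ?thesis using sp Gchar by auto
  qed
  have contFs: "continuous_on (closure {r<..1}) Fs"
  proof (rule continuous_on_coordinatewise_then_product)
    fix i
    show "continuous_on (closure {r<..1}) (\<lambda>x. Fs x i)"
      unfolding Fs_def by (cases "i = 0"; cases "i = k"; simp add: continuous_intros)
  qed
  have "Fs ` closure {r<..1} \<subseteq> closure G"
    by (rule image_closure_subset[OF contFs]) (use inG closure_subset[of G] in auto)
  then have FrG: "Fs r \<in> closure G" using r1 by auto
  have meanFr: "mean m Smin Smax (Fs r) = c"
  proof -
    have "mean m Smin Smax (Fs r) = (\<Sum>i<m. (if i = 0 then (1 - r) * ?S i else 0) + (if i = k then r * ?S i else 0))"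
      unfolding mean_def Fs_def by (rule sum.cong) (auto simp: algebra_simps)
    also have "\<dots> = (\<Sum>i<m. (if i = 0 then (1 - r) * ?S i else 0)) + (\<Sum>i<m. (if i = k then r * ?S i else 0))"
      by (rule sum.distrib)
    also have "\<dots> = (1 - r) * ?S 0 + r * ?S k" using assms(1,6) by (simp only: sum.delta finite_lessThan) (simp add: algebra_simps)
    finally show ?thesis unfolding c_def S0 by (simp add: algebra_simps)
  qed
  have Bv: "Bvals m n Smin Smax \<alpha> (replicate n (?S k)) = mean m Smin Smax ` closure G"
    unfolding Bvals_def Fset_def G_def \<Omega>_def by simp
  show ?thesis
    unfolding Bv c_def[symmetric] r_def[symmetric]
  proof (intro conjI ballI)
    show "c \<in> mean m Smin Smax ` closure G" using meanFr FrG by (metis image_eqI)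
  next
    fix v assume "v \<in> mean m Smin Smax ` closure G"
    then obtain F where "F \<in> closure G" "v = mean m Smin Smax F" by blast
    then show "c \<le> v" using closL by blast
  qed
qed

end
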